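(* Let $K,L,T\ge 2$, $1\le r\le T$ and $1\le s\le\min(T,K+r)$ be integers, and let $\mathrm{DOG}_{rs}(K,L,T)$ be the integer vectors $\boldsymbol{\alpha}^{(p)}=(0,1,\dots,K-1)$, $\boldsymbol{\alpha}^{(s)}=K+\mathrm{GAP}(T,K+r,r)$, $\boldsymbol{\beta}^{(p)}=(K+r)\cdot(0,1,\dots,L-1)$, $\boldsymbol{\beta}^{(s)}=(K+r)(L-1)+K+\mathrm{GAP}(T,K+r,s)$. Then $(\boldsymbol{\alpha}^{(p)},\boldsymbol{\alpha}^{(s)},\boldsymbol{\beta}^{(p)},\boldsymbol{\beta}^{(s)})$ is a private and decodable degree table for parameters $K,L,T$ with $N=|\mathcal{TL}\cup\mathcal{TR}\cup\mathcal{BL}\cup\mathcal{BR}|$ unique entries.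
   Context: $\mathrm{GAP}(\ell,x,r)\in\mathbb{Z}^\ell$ is the vector of the first $\ell$ terms of $(0,1,\dots,r-1,\;x,\dots,x+r-1,\;2x,\dots,2x+r-1,\dots)$; adding a scalar to a vector adds it entrywise. For integer vectors $\boldsymbol{\alpha}^{(p)}\in\mathbb{Z}^K,\boldsymbol{\alpha}^{(s)}\in\mathbb{Z}^T,\boldsymbol{\beta}^{(p)}\in\mathbb{Z}^L,\boldsymbol{\beta}^{(s)}\in\mathbb{Z}^T$, with $\{\mathbf v\}$ the set of entries of $\mathbf v$ and integer sumsets $\mathcal A+\mathcal B=\{a+b\}$, let $\mathcal{TL}=\{\boldsymbol{\alpha}^{(p)}\}+\{\boldsymbol{\beta}^{(p)}\}$, $\mathcal{TR}=\{\boldsymbol{\alpha}^{(p)}\}+\{\boldsymbol{\beta}^{(s)}\}$, $\mathcal{BL}=\{\boldsymbol{\alpha}^{(s)}\}+\{\boldsymbol{\beta}^{(p)}\}$, $\mathcal{BR}=\{\boldsymbol{\alpha}^{(s)}\}+\{\boldsymbol{\beta}^{(s)}\}$. The tuple is a private and decodable degree table for $K,L,T$ with $N$ unique entries if: (I) $|\mathcal{TL}\cup\mathcal{TR}\cup\mathcal{BL}\cup\mathcal{BR}|=N$; (II) $|\mathcal{TL}|=KL$; (III) $\mathcal{TL}\cap\mathcal{TR}=\mathcal{TL}\cap\mathcal{BL}=\mathcal{TL}\cap\mathcal{BR}=\emptyset$; (IV) the concatenation $\boldsymbol{\alpha}^{(p)}\|\boldsymbol{\alpha}^{(s)}$ has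 $K+T$ distinct entries and $\boldsymbol{\beta}^{(p)}\|\boldsymbol{\beta}^{(s)}$ has $L+T$ distinct entries. *)

theory Defs
  imports Main
begin

text \<open>Integer vectors are represented as lists of integers.
  GAP l x r: the first l terms of 0,1,..,r-1, x,..,x+r-1, 2x,..,2x+r-1, ...;
  the i-th term (0-indexed) is (i div r) * x + (i mod r).\<close>
definition GAP :: "nat \<Rightarrow> int \<Rightarrow> nat \<Rightarrow> int list" where
  "GAP l x r = map (\<lambda>i. int (i div r) * x + int (i mod r)) [0..<l]"

definition vadd :: "int \<Rightarrow> int list \<Rightarrow> int list" where
  "vadd c v = map (\<lambda>a. c + a) v"

definition sumset :: "int set \<Rightarrow> int set \<Rightarrow> int set" where
  "sumset A B = {a + b | a b. a \<in> A \<and> b \<in> B}"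

definition private_decodable_degree_table ::
  "int list \<Rightarrow> int list \<Rightarrow> int list \<Rightarrow> int list \<Rightarrow> nat \<Rightarrow> nat \<Rightarrow> nat \<Rightarrow> nat \<Rightarrow> bool" where
  "private_decodable_degree_table ap as bp bs K L T N \<longleftrightarrow>
     length ap = K \<and> length as = T \<and> length bp = L \<and> length bs = T \<and>
     (let TL = sumset (set ap) (set bp); TR = sumset (set ap) (set bs);
          BL = sumset (set as) (set bp); BR = sumset (set as) (set bs) in
       card (TL \<union> TR \<union> BL \<union> BR) = N \<and>
       card TL = K * L \<and>
       TL \<inter> TR = {} \<and> TL \<inter> BL = {} \<and> TL \<inter> BR = {} \<and>
       distinct (ap @ as) \<and> distinct (bp @ bs))"

definition DOG_ap :: "nat \<Rightarrow> int list" where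
  "DOG_ap K = map int [0..<K]"
definition DOG_as :: "nat \<Rightarrow> nat \<Rightarrow> nat \<Rightarrow> int list" where
  "DOG_as K T r = vadd (int K) (GAP T (int K + int r) r)"
definition DOG_bp :: "nat \<Rightarrow> nat \<Rightarrow> nat \<Rightarrow> int list" where
  "DOG_bp K L r = map (\<lambda>j. (int K + int r) * int j) [0..<L]"
definition DOG_bs :: "nat \<Rightarrow> nat \<Rightarrow> nat \<Rightarrow> nat \<Rightarrow> nat \<Rightarrow> int list" where
  "DOG_bs K L T r s = vadd ((int K + int r) * (int L - 1) + int K) (GAP T (int K + int r) s)"

end

theory Submission
  imports Defs
begin

lemma divmod_eq:
  fixes M q t :: int
  assumes "0 \<le> t" "t < M"
  shows "(q * M + t) div M = q" "(q * M + t) mod M = t"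
  using assms by (simp_all add: add.commute)

lemma gap_inj:
  fixes M :: int and r :: nat
  assumes "0 < r" "int r \<le> M"
  shows "inj_on (\<lambda>i. int (i div r) * M + int (i mod r)) A"
proof
  fix i j assume "int (i div r) * M + int (i mod r) = int (j div r) * M + int (j mod r)"
  note e = this
  have "i mod r < r" "j mod r < r" using assms by simp_all
  then have a: "int (i mod r) < M" "int (j mod r) < M" using assms by linarith+
  have b: "(int (i div r) * M + int (i mod r)) div M = int (i div r)"
       "(int (i div r) * M + int (i mod r)) mod M = int (i mod r)"
    using divmod_eq[of "int (i mod r)" M "int (i div r)"] a by simp_all
  have c: "(int (j div r) * M + int (j mod r)) div M = int (j div r)"
       "(int (j div r) * M + int (j mod r)) mod M = int (j mod r)"
    using divmod_eq[of "int (j mod r)" M "int (j div r)"] a by simp_all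
  have "int (i div r) = int (j div r)" "int (i mod r) = int (j mod r)"
    using b c e by metis+
  then have "i div r = j div r" "i mod r = j mod r" by simp_all
  then show "i = j" by (metis div_mult_mod_eq)
qed

lemma gap_mod:
  fixes M :: int and r :: nat
  assumes "0 < r" "int r \<le> M"
  shows "(int (i div r) * M + int (i mod r)) mod M = int (i mod r)"
proof -
  have "i mod r < r" using assms by simp
  then have "int (i mod r) < M" using assms by linarith
  then show ?thesis using divmod_eq by simp
qed

lemma gap_ge: "0 \<le> (M::int) \<Longrightarrow> 0 \<le> int (i div r) * M + int (i mod r)"
  by simp

theorem lemma3:
  fixes K L T r s :: nat
  assumes "K \<ge> 2" "L \<ge> 2" "T \<ge> 2"
    and "1 \<le> r" "r \<le> T"
    and "1 \<le> s" "s \<le> min T (K + r)"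
  shows "private_decodable_degree_table (DOG_ap K) (DOG_as K T r) (DOG_bp K L r) (DOG_bs K L T r s) K L T
           (card (let ap = DOG_ap K; as = DOG_as K T r; bp = DOG_bp K L r; bs = DOG_bs K L T r s in
                  sumset (set ap) (set bp) \<union> sumset (set ap) (set bs) \<union>
                  sumset (set as) (set bp) \<union> sumset (set as) (set bs)))"
proof -
  define M where "M = int K + int r"
  have M: "int K < M" "int r \<le> M" "int s \<le> M" "0 < M" using assms unfolding M_def by auto
  have sap: "set (DOG_ap K) = int ` {0..<K}" by (simp add: DOG_ap_def)
  have sas: "set (DOG_as K T r) = (\<lambda>i. int K + (int (i div r) * M + int (i mod r))) ` {0..<T}"
    by (simp add: DOG_as_def vadd_def GAP_def M_def image_image)
  have sbp: "set (DOG_bp K L r) = (\<lambda>j. M * int j) ` {0..<L}"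
    by (simp add: DOG_bp_def M_def)
  have sbs: "set (DOG_bs K L T r s) = (\<lambda>i. M * (int L - 1) + int K + (int (i div s) * M + int (i mod s))) ` {0..<T}"
    by (simp add: DOG_bs_def vadd_def GAP_def M_def image_image)
  have TLeq: "sumset (set (DOG_ap K)) (set (DOG_bp K L r)) = (\<lambda>(a,j). int a + M * int j) ` ({0..<K} \<times> {0..<L})"
    unfolding sumset_def sap sbp by auto
  have injTL: "inj_on (\<lambda>(a,j). int a + M * int j) ({0..<K} \<times> {0..<L})"
  proof (rule inj_onI, clarsimp)
    fix a j a' j' assume h: "a < K" "a' < K" "int a + M * int j = int a' + M * int j'"
    have "int a < M" "int a' < M" using h M by auto
    then have "(int j * M + int a) div M = int j" "(int j' * M + int a') div M = int j'"
      "(int j * M + int a) mod M = int a" "(int j' * M + int a') mod M = int a'"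
      using divmod_eq by auto
    with h(3) show "a = a' \<and> j = j'" by (metis mult.commute add.commute of_nat_eq_iff)
  qed
  have cardTL: "card (sumset (set (DOG_ap K)) (set (DOG_bp K L r))) = K * L"
    unfolding TLeq using card_image[OF injTL] by (simp add: card_cartesian_product)
  have TLmax: "x < M * (int L - 1) + int K" if xin: "x \<in> sumset (set (DOG_ap K)) (set (DOG_bp K L r))" for x
  proof -
    obtain a j where "a < K" "j < L" "x = int a + M * int j" using xin unfolding TLeq by fastforce
    moreover have "M * int j \<le> M * (int L - 1)" using \<open>j < L\<close> M by (intro mult_left_mono) auto
    ultimately show ?thesis by linarith
  qed
  have TLmod: "x mod M < int K" if xin: "x \<in> sumset (set (DOG_ap K)) (set (DOG_bp K L r))" for x
  proof -
    obtain a j where "a < K" "x = int a + M * int j" using xin unfolding TLeq by fastforce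
    moreover have "(int j * M + int a) mod M = int a" using divmod_eq M \<open>a < K\<close> by auto
    ultimately show ?thesis by (simp add: mult.commute add.commute)
  qed
  have d1: "TL \<inter> TR = {}" if "TL = sumset (set (DOG_ap K)) (set (DOG_bp K L r))"
    "TR = sumset (set (DOG_ap K)) (set (DOG_bs K L T r s))" for TL TR
  proof -
    have "x \<ge> M * (int L - 1) + int K" if "x \<in> TR" for x
      using that \<open>TR = _\<close> M unfolding sumset_def sap sbs by (auto intro!: add_nonneg_nonneg)
    then show ?thesis using TLmax that(1) by force
  qed
  have d3: "TL \<inter> BR = {}" if "TL = sumset (set (DOG_ap K)) (set (DOG_bp K L r))"
    "BR = sumset (set (DOG_as K T r)) (set (DOG_bs K L T r s))" for TL BR
  proof -
    have "x \<ge> M * (int L - 1) + int K" if xin: "x \<in> BR" for x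
    proof -
      obtain a b where ab: "a \<in> set (DOG_as K T r)" "b \<in> set (DOG_bs K L T r s)" "x = a + b"
        using xin \<open>BR = _\<close> unfolding sumset_def by blast
      have "a \<ge> 0" using ab(1) M unfolding sas by auto
      moreover have "b \<ge> M * (int L - 1) + int K" using ab(2) M unfolding sbs by auto
      ultimately show ?thesis using ab(3) by linarith
    qed
    then show ?thesis using TLmax that(1) by force
  qed
  have asmod: "x mod M \<ge> int K" if xin: "x \<in> set (DOG_as K T r)" for x
  proof -
    obtain i where x: "x = int K + (int (i div r) * M + int (i mod r))" using xin sas by auto
    have "int (i mod r) < int r" using assms by simp
    then have "int (i div r) * M + (int K + int (i mod r)) = x" "int K + int (i mod r) < M"
      using x M_def by auto
    then have "x mod M = int K + int (i mod r)" using divmod_eq[of "int K + int (i mod r)" M] by force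
    then show ?thesis by simp
  qed
  have d2: "TL \<inter> BL = {}" if "TL = sumset (set (DOG_ap K)) (set (DOG_bp K L r))"
    "BL = sumset (set (DOG_as K T r)) (set (DOG_bp K L r))" for TL BL
  proof -
    have "x mod M \<ge> int K" if "x \<in> BL" for x
    proof -
      obtain a j where "a \<in> set (DOG_as K T r)" "j < L" "x = a + M * int j"
        using \<open>x \<in> BL\<close> \<open>BL = _\<close> unfolding sumset_def sbp by auto
      then show ?thesis using asmod by (simp add: mult.commute)
    qed
    then show ?thesis using TLmod that(1) by force
  qed
  have dap: "distinct (DOG_ap K)" by (simp add: DOG_ap_def distinct_map)
  have das: "distinct (DOG_as K T r)"
    using gap_inj[of r M] assms M unfolding DOG_as_def vadd_def GAP_def M_def[symmetric]
    by (auto simp add: distinct_map inj_on_def)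
  have dbp: "distinct (DOG_bp K L r)"
    using M by (simp add: DOG_bp_def M_def[symmetric] distinct_map inj_on_def)
  have dbs: "distinct (DOG_bs K L T r s)"
    using gap_inj[of s M] assms M unfolding DOG_bs_def vadd_def GAP_def M_def[symmetric]
    by (auto simp add: distinct_map inj_on_def)
  have dapas: "set (DOG_ap K) \<inter> set (DOG_as K T r) = {}"
  proof -
    have "x mod M < int K" if "x \<in> set (DOG_ap K)" for x using that M unfolding sap by auto
    then show ?thesis using asmod by force
  qed
  have dbpbs: "set (DOG_bp K L r) \<inter> set (DOG_bs K L T r s) = {}"
  proof -
    have "x \<le> M * (int L - 1)" if "x \<in> set (DOG_bp K L r)" for x
      using that M unfolding sbp by (auto intro!: mult_left_mono)
    moreover have "x \<ge> M * (int L - 1) + int K" if "x \<in> set (DOG_bs K L T r s)" for x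
      using that M unfolding sbs by auto
    ultimately show ?thesis using assms by force
  qed
  have len: "length (DOG_ap K) = K" "length (DOG_as K T r) = T" "length (DOG_bp K L r) = L"
    "length (DOG_bs K L T r s) = T"
    by (simp_all add: DOG_ap_def DOG_as_def DOG_bp_def DOG_bs_def vadd_def GAP_def)
  show ?thesis
    unfolding private_decodable_degree_table_def Let_def
    unfolding distinct_append
    by (intro conjI refl len cardTL d1[OF refl refl] d2[OF refl refl] d3[OF refl refl] dap das dbp dbs dapas dbpbs)
qed

end
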